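(* Let $n\ge1$ and let $f_1,\ldots,f_n$ be Alpert multiwavelets of multiplicity $n$. Then there is a real constant $c_{n,0}$ with $c_{n,0}^{-2}=2\int_0^1 p_{n-1}(x)^2\,dx$ such that $f_n(x)=c_{n,0}\,p_{n-1}(x)$ for $x\in(0,1)$. If moreover $n\ge2$, there is a real constant $d_{n,0}$ with $d_{n,0}^{-2}=2\int_0^1 q_{n-1}(x)^2\,dx$ such that $f_{n-1}(x)=d_{n,0}\,q_{n-1}(x)$ for $x\in(0,1)$.
   Context: Alpert multiwavelets of multiplicity $n\in\mathbb{N}$: real functions $f_1,\ldots,f_n$ supported on $[-1,1]$ such that (i) the restriction of each $f_i$ to $(0,1)$ is a polynomial of degree at most $n-1$; (ii) $f_k(-t)=(-1)^{k+n-1}f_k(t)$ for $t\in(0,1)$; (iii) $\int_{-1}^1 f_i(t)f_j(t)\,dt=\delta_{i,j}$ for $1\le i,j\le n$; (iv) $\int_{-1}^1 f_k(t)t^i\,dt=0$ for $i=0,1,\ldots,k+n-2$. Pochhammer symbol: $(a)_0=1$, $(a)_n=a(a+1)\cdots(a+n-1)$; for real $a$ and integer $n\ge0$, $\binom{n+a}{n}:=\frac{(a+1)_n}{n!}$. Define $p_n(x)=\sum_{k=0}^n\binom nk\binom{n+\frac k2}{n}(-1)^{n-k}x^k$ and $q_n(x)=\sum_{k=0}^n\binom nk\binom{n+\frac{k-1}2}{n}(-1)^{n-k}x^k$. *)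

theory Defs
  imports "HOL-Analysis.Analysis" "HOL-Computational_Algebra.Polynomial"
begin

text \<open>Generalized binomial: binom(n+a, n) := (a+1)_n / n!.\<close>
definition gbinom :: "nat \<Rightarrow> real \<Rightarrow> real" where
  "gbinom n a = pochhammer (a + 1) n / fact n"

definition pA :: "nat \<Rightarrow> real \<Rightarrow> real" where
  "pA n x = (\<Sum>k=0..n. real (n choose k) * gbinom n (real k / 2) * (-1) ^ (n - k) * x ^ k)"

definition qA :: "nat \<Rightarrow> real \<Rightarrow> real" where
  "qA n x = (\<Sum>k=0..n. real (n choose k) * gbinom n ((real k - 1) / 2) * (-1) ^ (n - k) * x ^ k)"

definition alpert_multiwavelets :: "nat \<Rightarrow> (nat \<Rightarrow> real \<Rightarrow> real) \<Rightarrow> bool" where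
  "alpert_multiwavelets n f \<longleftrightarrow>
     (\<forall>i\<in>{1..n}. \<forall>t. t \<notin> {-1..1} \<longrightarrow> f i t = 0) \<and>
     (\<forall>i\<in>{1..n}. \<exists>P :: real poly. degree P \<le> n - 1 \<and> (\<forall>t\<in>{0<..<1}. f i t = poly P t)) \<and>
     (\<forall>k\<in>{1..n}. \<forall>t\<in>{0<..<1}. f k (-t) = (-1) ^ (k + n - 1) * f k t) \<and>
     (\<forall>i\<in>{1..n}. \<forall>j\<in>{1..n}.
        integral {-1..1} (\<lambda>t. f i t * f j t) = (if i = j then 1 else 0)) \<and>
     (\<forall>k\<in>{1..n}. \<forall>i\<le>k + n - 2. integral {-1..1} (\<lambda>t. f k t * t ^ i) = 0)"

end

theory Submission imports Defs begin

lemma diff_step: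
  fixes g :: "nat \<Rightarrow> real"
  shows "(\<Sum>k\<le>Suc N. real (Suc N choose k) * (-1)^(Suc N - k) * g k) =
         (\<Sum>k\<le>N. real (N choose k) * (-1)^(N-k) * (g (Suc k) - g k))"
proof -
  have A: "(\<Sum>k\<le>Suc N. real (N choose k) * (-1)^(Suc N - k) * g k) =
     (-1)^(Suc N) * g 0 + (\<Sum>i\<le>N. real (N choose Suc i) * (-1)^(N - i) * g (Suc i))"
    by (subst sum.atMost_Suc_shift) simp
  have B: "(\<Sum>k\<le>Suc N. real (N choose k) * (-1)^(Suc N - k) * g k) =
     (\<Sum>k\<le>N. - (real (N choose k) * (-1)^(N - k) * g k))"
    by (simp add: Suc_diff_le)
  have C: "(\<Sum>k\<le>Suc N. real (Suc N choose k) * (-1)^(Suc N - k) * g k) =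
     (-1)^(Suc N) * g 0 + (\<Sum>i\<le>N. real (N choose i) * (-1)^(N - i) * g (Suc i))
       + (\<Sum>i\<le>N. real (N choose Suc i) * (-1)^(N - i) * g (Suc i))"
    by (subst sum.atMost_Suc_shift) (simp add: sum.distrib algebra_simps)
  show ?thesis using A B C by (simp add: sum.distrib sum_subtractf algebra_simps sum_negf)
qed

lemma fd_mono: "m < N \<Longrightarrow> (\<Sum>k\<le>N. real (N choose k) * (-1)^(N-k) * real k ^ m) = 0"
proof (induction N arbitrary: m)
  case 0 then show ?case by simp
next
  case (Suc N)
  have e: "(1 + real k) ^ m - real k ^ m = (\<Sum>i<m. real (m choose i) * real k ^ i)" for k
  proof -
    have "(1 + real k) ^ m = (real k + 1) ^ m" by (simp add: add.commute)
    also have "\<dots> = (\<Sum>i\<le>m. real (m choose i) * real k ^ i)"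
      by (subst binomial_ring) simp
    finally show ?thesis by (simp add: lessThan_Suc_atMost[symmetric])
  qed
  have "(\<Sum>k\<le>Suc N. real (Suc N choose k) * (-1)^(Suc N-k) * real k ^ m)
      = (\<Sum>k\<le>N. real (N choose k) * (-1)^(N-k) * (\<Sum>i<m. real (m choose i) * real k ^ i))"
    by (subst diff_step) (simp add: e)
  also have "\<dots> = (\<Sum>i<m. real (m choose i) * (\<Sum>k\<le>N. real (N choose k) * (-1)^(N-k) * real k ^ i))"
    by (simp add: sum_distrib_left sum_distrib_right mult_ac sum.swap[of _ "{..<m}"])
  also have "\<dots> = 0" using Suc by (intro sum.neutral) auto
  finally show ?case .
qed

lemma fd_poly: "degree (G::real poly) < N \<Longrightarrow> (\<Sum>k\<le>N. real (N choose k) * (-1)^(N-k) * poly G (real k)) = 0"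
proof -
  assume d: "degree G < N"
  have "(\<Sum>k\<le>N. real (N choose k) * (-1)^(N-k) * poly G (real k)) =
        (\<Sum>i\<le>degree G. coeff G i * (\<Sum>k\<le>N. real (N choose k) * (-1)^(N-k) * real k ^ i))"
    by (simp add: poly_altdef sum_distrib_left sum_distrib_right mult_ac sum.swap[of _ "{..degree G}"])
  also have "\<dots> = 0" using d by (intro sum.neutral) (auto intro!: fd_mono)
  finally show ?thesis .
qed
lemma poch_sum:
  assumes j: "j < N" and b: "b > 0"
  shows "(\<Sum>k\<le>N. real (N choose k) * (-1)^(N-k) *
            (pochhammer (real k/2 + b) N / (real k/2 + b + real j))) = 0"
proof -
  define G :: "real poly" where "G = (\<Prod>i\<in>{0..<N}-{j}. [:b + real i, 1/2:])"
  have dG: "degree G < N"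
  proof -
    have "degree G \<le> sum (degree \<circ> (\<lambda>i. [:b + real i, 1/2:])) ({0..<N}-{j})"
      unfolding G_def by (rule degree_prod_sum_le) simp
    also have "\<dots> = card ({0..<N}-{j})" by simp
    also have "\<dots> = N - 1" using j by simp
    finally show ?thesis using j by simp
  qed
  have pk: "pochhammer (real k/2 + b) N / (real k/2 + b + real j) = poly G (real k)" for k
  proof -
    have pos: "real k/2 + b + real j \<noteq> 0" using b by (simp add: add_pos_nonneg) 
    have "pochhammer (real k/2 + b) N = (\<Prod>i\<in>{0..<N}. real k/2 + b + real i)"
      by (simp add: pochhammer_prod)
    also have "\<dots> = (real k/2 + b + real j) * (\<Prod>i\<in>{0..<N}-{j}. real k/2 + b + real i)"
      using j by (subst prod.remove[of _ j]) auto
    also have "(\<Prod>i\<in>{0..<N}-{j}. real k/2 + b + real i) = poly G (real k)"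
      unfolding G_def poly_prod by (intro prod.cong) (auto simp: algebra_simps)
    finally show ?thesis using pos by simp
  qed
  show ?thesis using fd_poly[OF dG] by (simp add: pk)
qed
lemma sign_lemma:
  fixes R :: "real poly"
  assumes "R \<noteq> 0"
  shows "\<exists>H. H \<noteq> 0 \<and> degree H \<le> degree R \<and> (\<forall>t. 0 < t \<and> t < 1 \<longrightarrow> 0 \<le> poly R t * poly H (t^2))"
  using assms
proof (induction "degree R" arbitrary: R rule: less_induct)
  case less
  show ?case
  proof (cases "\<exists>s. 0 < s \<and> s < 1 \<and> poly R s = 0")
    case True
    then obtain s where s: "0 < s" "s < 1" "poly R s = 0" by blast
    then obtain R1 where R1: "R = [:-s,1:] * R1" using poly_eq_0_iff_dvd by (metis dvdE)
    have R1nz: "R1 \<noteq> 0" using less.prems R1 by auto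
    have "degree ([:-s,1:] * R1) = degree [:-s,1:] + degree R1" using R1nz by (intro degree_mult_eq) auto
    then have dR: "degree R = degree R1 + 1" using R1 by simp
    obtain H1 where H1: "H1 \<noteq> 0" "degree H1 \<le> degree R1"
      "\<forall>t. 0 < t \<and> t < 1 \<longrightarrow> 0 \<le> poly R1 t * poly H1 (t^2)"
      using less.hyps[of R1] dR R1nz by auto
    define H where "H = [:-(s^2),1:] * H1"
    have "H \<noteq> 0" using H1 unfolding H_def by (intro no_zero_divisors) auto
    moreover have "degree H \<le> degree R"
    proof -
      have "degree H = degree [:-(s^2),1:] + degree H1" unfolding H_def using H1 by (intro degree_mult_eq) auto
      then show ?thesis using H1 dR by simp
    qed
    moreover have "0 \<le> poly R t * poly H (t^2)" if t: "0 < t" "t < 1" for t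
    proof -
      have "poly R t * poly H (t^2) = ((t - s)^2 * (t + s)) * (poly R1 t * poly H1 (t^2))"
        by (simp add: R1 H_def algebra_simps power2_eq_square)
      also have "\<dots> \<ge> 0" using H1(3) t s by (intro mult_nonneg_nonneg[of "(t - s)^2 * (t + s)"]) auto
      finally show ?thesis .
    qed
    ultimately show ?thesis by blast
  next
    case False
    define c :: real where "c = (if poly R (1/2) \<ge> 0 then 1 else -1)"
    have "0 \<le> poly R t * poly [:c:] (t^2)" if t: "0 < t" "t < 1" for t
    proof (rule ccontr)
      assume neg: "\<not> ?thesis"
      have h0: "poly R (1/2) \<noteq> 0" using False by auto
      have "poly R t * poly R (1/2) < 0"
        using neg h0 by (auto simp: c_def split: if_splits simp: mult_less_0_iff)
      then have "poly R (min t (1/2)) * poly R (max t (1/2)) < 0"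
        by (cases "t \<le> 1/2") (auto simp: min_def max_def mult.commute)
      moreover have "min t (1/2) < max t (1/2)"
        using \<open>poly R t * poly R (1/2) < 0\<close> by (cases "t = 1/2") (auto simp: min_def max_def)
      ultimately obtain x where "min t (1/2) < x" "x < max t (1/2)" "poly R x = 0"
        using poly_IVT by blast
      then show False using False t by auto
    qed
    moreover have "[:c:] \<noteq> 0" by (simp add: c_def)
    ultimately show ?thesis by (intro exI[of _ "[:c:]"]) auto
  qed
qed
lemma poly_integrable: "(\<lambda>t. poly (P::real poly) t * t ^ m) integrable_on {a..b}"
  by (intro integrable_continuous_real continuous_intros)

lemma uniq_lemma:
  fixes R :: "real poly"
  assumes R: "R \<noteq> 0" and d: "degree R < d"
    and orth: "\<And>j. j < d \<Longrightarrow> integral {0..1} (\<lambda>t. poly R t * t ^ (m + 2*j)) = 0"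
  shows False
proof -
  obtain H where H: "H \<noteq> 0" "degree H \<le> degree R"
      "\<forall>t. 0 < t \<and> t < 1 \<longrightarrow> 0 \<le> poly R t * poly H (t^2)"
    using sign_lemma[OF R] by blast
  define F where "F = R * pcompose H [:0,0,1:] * monom 1 m"
  have pF: "poly F t = (\<Sum>i\<le>degree H. coeff H i * (poly R t * t ^ (m + 2*i)))" for t
    by (simp add: F_def poly_pcompose poly_monom poly_altdef[of H] sum_distrib_left
         sum_distrib_right power_add power_mult mult_ac power_mult_distrib power2_eq_square)
  have pF2: "poly F t = t^m * (poly R t * poly H (t^2))" for t
    by (simp add: F_def poly_pcompose poly_monom power2_eq_square mult_ac)
  have "integral {0..1} (poly F) = (\<Sum>i\<le>degree H. coeff H i * integral {0..1} (\<lambda>t. poly R t * t ^ (m + 2*i)))"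
    unfolding pF by (subst integral_sum) (auto intro!: integrable_continuous_real continuous_intros)
  also have "\<dots> = 0" using H(2) d by (intro sum.neutral) (auto simp: orth)
  finally have i0: "integral {0..1} (poly F) = 0" .
  have cF: "continuous_on {0..1} (poly F)" by (intro continuous_intros)
  have "poly F integrable_on {0..1}" using cF by (rule integrable_continuous_real)
  then have "(poly F has_integral 0) {0..1}" using i0 by (metis has_integral_integral)
  then have "(poly F has_integral 0) (cbox 0 1)" by simp
  then have z: "poly F x = 0" if "x \<in> {0..1}" for x
    using that H(3) by (intro has_integral_0_cbox_imp_0[of 0 1 "poly F" x])
      (use cF pF2 in auto)
  have "{0..1::real} \<subseteq> {x. poly F x = 0}" using z by auto
  moreover have "infinite {0..1::real}" by (simp add: infinite_Icc)
  ultimately have "infinite {x. poly F x = 0}" using finite_subset by blast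
  then have "F = 0" using poly_roots_finite by blast
  moreover have "pcompose H [:0,0,1:] \<noteq> 0" using H(1) by (simp add: pcompose_eq_0_iff)
  ultimately show False using R by (simp add: F_def)
qed
lemma unique_param:
  fixes P Q :: "real poly"
  assumes dP: "degree P \<le> d" and dQ: "degree Q \<le> d" and Q0: "poly Q 0 \<noteq> 0"
    and oP: "\<And>j. j < d \<Longrightarrow> integral {0..1} (\<lambda>t. poly P t * t ^ (m + 2*j)) = 0"
    and oQ: "\<And>j. j < d \<Longrightarrow> integral {0..1} (\<lambda>t. poly Q t * t ^ (m + 2*j)) = 0"
  shows "P = smult (poly P 0 / poly Q 0) Q"
proof -
  define c where "c = poly P 0 / poly Q 0"
  define R0 where "R0 = P - smult c Q"
  have "poly R0 0 = 0" using Q0 by (simp add: R0_def c_def)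
  then obtain R where R: "R0 = [:0,1:] * R" using poly_eq_0_iff_dvd[of R0 0] by (auto elim: dvdE)
  have dR0: "degree R0 \<le> d" unfolding R0_def
    using dP dQ degree_diff_le degree_smult_le by (metis le_trans)
  have "R = 0"
  proof (rule ccontr)
    assume Rnz: "R \<noteq> 0"
    have "degree R0 = degree [:0,1::real:] + degree R" unfolding R using Rnz by (intro degree_mult_eq) auto
    then have dR: "degree R < d" using dR0 by simp
    have "integral {0..1} (\<lambda>t. poly R t * t ^ (Suc m + 2*j)) = 0" if j: "j < d" for j
    proof -
      have "integral {0..1} (\<lambda>t. poly R t * t ^ (Suc m + 2*j)) = integral {0..1} (\<lambda>t. poly R0 t * t ^ (m + 2*j))"
        by (simp add: R algebra_simps)
      also have "\<dots> = integral {0..1} (\<lambda>t. poly P t * t ^ (m + 2*j) - c * (poly Q t * t ^ (m + 2*j)))"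
        by (simp add: R0_def algebra_simps)
      also have "\<dots> = integral {0..1} (\<lambda>t. poly P t * t ^ (m + 2*j)) - c * integral {0..1} (\<lambda>t. poly Q t * t ^ (m + 2*j))"
        by (subst integral_diff) (auto intro!: integrable_continuous_real continuous_intros)
      also have "\<dots> = 0" using oP oQ j by simp
      finally show ?thesis .
    qed
    then show False using uniq_lemma[OF Rnz dR] by blast
  qed
  then show ?thesis using R by (simp add: R0_def c_def)
qed
lemma pow_int: "((\<lambda>x::real. x ^ k) has_integral 1 / (real k + 1)) {0..1}"
proof -
  have "((\<lambda>x::real. x ^ k) has_integral ((\<lambda>x. x ^ Suc k / real (Suc k)) 1 - (\<lambda>x. x ^ Suc k / real (Suc k)) 0)) {0..1}"
  proof (rule fundamental_theorem_of_calculus)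
    fix x :: real
    have "((\<lambda>x. x ^ Suc k / real (Suc k)) has_real_derivative x ^ k) (at x within {0..1})"
      by (intro derivative_eq_intros) auto
    then show "((\<lambda>x. x ^ Suc k / real (Suc k)) has_vector_derivative x ^ k) (at x within {0..1})"
      by (simp add: has_real_derivative_iff_has_vector_derivative)
  qed simp
  then show ?thesis by (simp add: add.commute)
qed

lemma moment_sum:
  fixes a :: "nat \<Rightarrow> real"
  shows "integral {0..1} (\<lambda>t. (\<Sum>k=0..N. a k * t ^ k) * t ^ m) = (\<Sum>k=0..N. a k / (real k + real m + 1))"
proof -
  have "((\<lambda>t. \<Sum>k=0..N. a k * t ^ (k + m)) has_integral (\<Sum>k=0..N. a k * (1 / (real (k + m) + 1)))) {0..1}"
    by (intro has_integral_sum has_integral_mult_right pow_int) auto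
  moreover have "(\<lambda>t. (\<Sum>k=0..N. a k * t ^ k) * t ^ m) = (\<lambda>t. \<Sum>k=0..N. a k * t ^ (k + m))"
    by (simp add: sum_distrib_right power_add mult.assoc)
  ultimately show ?thesis by (simp add: integral_unique)
qed

lemma pA_orth:
  assumes j: "j < N"
  shows "integral {0..1} (\<lambda>t. pA N t * t ^ (1 + 2*j)) = 0"
proof -
  have "integral {0..1} (\<lambda>t. pA N t * t ^ (1 + 2*j)) =
     (\<Sum>k=0..N. real (N choose k) * gbinom N (real k / 2) * (-1) ^ (N - k) / (real k + real (1 + 2*j) + 1))"
    unfolding pA_def by (rule moment_sum)
  also have "\<dots> = (1 / (2 * fact N)) * (\<Sum>k\<le>N. real (N choose k) * (-1)^(N-k) *
            (pochhammer (real k/2 + 1) N / (real k/2 + 1 + real j)))"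
    unfolding sum_distrib_left atLeast0AtMost
  proof (intro sum.cong refl)
    fix k
    have "real k + real (1 + 2*j) + 1 = 2 * (real k/2 + 1 + real j)" by simp
    moreover have "real k/2 + 1 + real j > 0" by (simp add: add_pos_nonneg)
    ultimately show "real (N choose k) * gbinom N (real k / 2) * (-1) ^ (N - k) / (real k + real (1 + 2*j) + 1) =
       1 / (2 * fact N) * (real (N choose k) * (-1)^(N-k) * (pochhammer (real k/2 + 1) N / (real k/2 + 1 + real j)))"
      by (simp add: gbinom_def field_simps)
  qed
  also have "\<dots> = 0" using poch_sum[OF j, of 1] by simp
  finally show ?thesis .
qed

lemma qA_orth:
  assumes j: "j < N"
  shows "integral {0..1} (\<lambda>t. qA N t * t ^ (0 + 2*j)) = 0"
proof -
  have "integral {0..1} (\<lambda>t. qA N t * t ^ (0 + 2*j)) =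
     (\<Sum>k=0..N. real (N choose k) * gbinom N ((real k - 1) / 2) * (-1) ^ (N - k) / (real k + real (0 + 2*j) + 1))"
    unfolding qA_def by (rule moment_sum)
  also have "\<dots> = (1 / (2 * fact N)) * (\<Sum>k\<le>N. real (N choose k) * (-1)^(N-k) *
            (pochhammer (real k/2 + 1/2) N / (real k/2 + 1/2 + real j)))"
    unfolding sum_distrib_left atLeast0AtMost
  proof (intro sum.cong refl)
    fix k
    have "real k + real (0 + 2*j) + 1 = 2 * (real k/2 + 1/2 + real j)" by simp
    moreover have "real k/2 + 1/2 + real j > 0" by (simp add: add_pos_nonneg)
    moreover have "(real k - 1) / 2 + 1 = real k/2 + 1/2" by (simp add: field_simps)
    ultimately show "real (N choose k) * gbinom N ((real k - 1) / 2) * (-1) ^ (N - k) / (real k + real (0 + 2*j) + 1) =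
       1 / (2 * fact N) * (real (N choose k) * (-1)^(N-k) * (pochhammer (real k/2 + 1/2) N / (real k/2 + 1/2 + real j)))"
      by (simp add: gbinom_def field_simps)
  qed
  also have "\<dots> = 0" using poch_sum[OF j, of "1/2"] by simp
  finally show ?thesis .
qed
lemma sym_integral:
  fixes h \<phi> :: "real \<Rightarrow> real"
  assumes ev: "\<forall>t\<in>{0<..<1}. h (-t) = h t" and eq: "\<forall>t\<in>{0<..<1}. h t = \<phi> t"
    and c: "continuous_on {0..1} \<phi>"
  shows "integral {-1..1} h = 2 * integral {0..1} \<phi>"
proof -
  define I where "I = integral {0..1} \<phi>"
  have hI: "(\<phi> has_integral I) {0..1}" unfolding I_def
    using c by (simp add: integrable_continuous_real has_integral_integral[symmetric] integrable_integral)
  have h1: "(h has_integral I) {0..1}"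
    by (rule has_integral_spike_finite[of "{0,1}" _ _ \<phi>]) (use eq hI in auto)
  have "((\<lambda>t. \<phi> (-t)) has_integral I) {-1..-0}" using hI by (simp only: has_integral_reflect_real)
  then have r: "((\<lambda>t. \<phi> (-t)) has_integral I) {-1..0}" by simp
  have h2: "(h has_integral I) {-1..0}"
  proof (rule has_integral_spike_finite[of "{-1,0}" _ _ "\<lambda>t. \<phi> (-t)"])
    fix t :: real assume t: "t \<in> {-1..0} - {-1,0}"
    then have a: "-1 \<le> t" "t \<le> 0" "t \<noteq> -1" "t \<noteq> 0" by auto
    have "-1 < t" using a(1,3) by linarith
    moreover have "t < 0" using a(2,4) by linarith
    ultimately have "-t \<in> {0<..<1}" by auto
    then show "h t = \<phi> (-t)" using ev eq by (metis minus_minus)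
  qed (use r in auto)
  have "(h has_integral (I + I)) {-1..1}" by (rule has_integral_combine[OF _ _ h2 h1]) auto
  then show ?thesis unfolding I_def by (simp add: integral_unique)
qed

definition PA :: "nat \<Rightarrow> real poly" where
  "PA N = (\<Sum>k=0..N. monom (real (N choose k) * gbinom N (real k / 2) * (-1) ^ (N - k)) k)"
definition QA :: "nat \<Rightarrow> real poly" where
  "QA N = (\<Sum>k=0..N. monom (real (N choose k) * gbinom N ((real k - 1) / 2) * (-1) ^ (N - k)) k)"

lemma poly_PA: "poly (PA N) = pA N"
  by (rule ext) (simp add: PA_def pA_def poly_sum poly_monom)
lemma poly_QA: "poly (QA N) = qA N"
  by (rule ext) (simp add: QA_def qA_def poly_sum poly_monom)
lemma degree_PA: "degree (PA N) \<le> N"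
  unfolding PA_def by (intro degree_sum_le) (auto intro: order.trans[OF degree_monom_le])
lemma degree_QA: "degree (QA N) \<le> N"
  unfolding QA_def by (intro degree_sum_le) (auto intro: order.trans[OF degree_monom_le])

lemma sum0: "(\<Sum>k=0..N. (c k :: real) * 0 ^ k) = c 0"
  by (induction N) auto

lemma pA0: "pA N 0 \<noteq> 0"
proof -
  have "pA N 0 = gbinom N 0 * (-1)^N" unfolding pA_def using sum0[of "\<lambda>k. real (N choose k) * gbinom N (real k / 2) * (-1) ^ (N - k)" N] by simp
  then show ?thesis by (simp add: gbinom_def pochhammer_fact[symmetric] del: pochhammer_fact)
qed

lemma qA0: "qA N 0 \<noteq> 0"
proof -
  have "qA N 0 = gbinom N (-1/2) * (-1)^N" unfolding qA_def using sum0[of "\<lambda>k. real (N choose k) * gbinom N ((real k - 1) / 2) * (-1) ^ (N - k)" N] by simp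
  moreover have "pochhammer (1/2::real) N \<noteq> 0"
  proof
    assume "pochhammer (1/2::real) N = 0"
    then obtain k where "(1/2::real) = - of_nat k" by (auto simp: pochhammer_eq_0_iff)
    moreover have "- real k \<le> 0" by simp
    ultimately show False by linarith
  qed
  ultimately show ?thesis by (simp add: gbinom_def)
qed
lemma finish:
  fixes g :: "real \<Rightarrow> real" and P Q :: "real poly"
  assumes gP: "\<forall>t\<in>{0<..<1}. g t = poly P t" and dP: "degree P \<le> d" and dQ: "degree Q \<le> d"
    and Q0: "poly Q 0 \<noteq> 0"
    and oP: "\<And>j. j < d \<Longrightarrow> integral {0..1} (\<lambda>t. poly P t * t ^ (m + 2*j)) = 0"
    and oQ: "\<And>j. j < d \<Longrightarrow> integral {0..1} (\<lambda>t. poly Q t * t ^ (m + 2*j)) = 0"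
    and nP: "2 * integral {0..1} (\<lambda>t. poly P t * poly P t) = 1"
  shows "\<exists>c. c \<noteq> 0 \<and> 1 / c^2 = 2 * integral {0..1} (\<lambda>x. (poly Q x)^2) \<and> (\<forall>x\<in>{0<..<1}. g x = c * poly Q x)"
proof -
  define c where "c = poly P 0 / poly Q 0"
  have PQ: "P = smult c Q" unfolding c_def by (rule unique_param[OF dP dQ Q0 oP oQ])
  have "integral {0..1} (\<lambda>t. poly P t * poly P t) = c^2 * integral {0..1} (\<lambda>x. (poly Q x)^2)"
    by (simp add: PQ power2_eq_square mult_ac)
  with nP have e: "2 * c^2 * integral {0..1} (\<lambda>x. (poly Q x)^2) = 1" by simp
  then have "c \<noteq> 0" by auto
  moreover have "1 / c^2 = 2 * integral {0..1} (\<lambda>x. (poly Q x)^2)"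
    using e \<open>c \<noteq> 0\<close> by (simp add: field_simps)
  moreover have "\<forall>x\<in>{0<..<1}. g x = c * poly Q x" using gP by (simp add: PQ)
  ultimately show ?thesis by blast
qed

theorem mainTheorem4:
  fixes n :: nat and f :: "nat \<Rightarrow> real \<Rightarrow> real"
  assumes "n \<ge> 1" and "alpert_multiwavelets n f"
  shows "(\<exists>c :: real. c \<noteq> 0 \<and> 1 / c ^ 2 = 2 * integral {0..1} (\<lambda>x. (pA (n - 1) x) ^ 2) \<and>
            (\<forall>x\<in>{0<..<1}. f n x = c * pA (n - 1) x)) \<and>
         (n \<ge> 2 \<longrightarrow> (\<exists>d :: real. d \<noteq> 0 \<and> 1 / d ^ 2 = 2 * integral {0..1} (\<lambda>x. (qA (n - 1) x) ^ 2) \<and>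
            (\<forall>x\<in>{0<..<1}. f (n - 1) x = d * qA (n - 1) x)))"
proof -
  note A = assms(2)[unfolded alpert_multiwavelets_def]
  have polyex: "\<And>i. i \<in> {1..n} \<Longrightarrow> \<exists>P :: real poly. degree P \<le> n - 1 \<and> (\<forall>t\<in>{0<..<1}. f i t = poly P t)"
    using A by blast
  have par: "\<And>k t. k \<in> {1..n} \<Longrightarrow> t \<in> {0<..<1} \<Longrightarrow> f k (-t) = (-1) ^ (k + n - 1) * f k t"
    using A by blast
  have orth: "\<And>i j. i \<in> {1..n} \<Longrightarrow> j \<in> {1..n} \<Longrightarrow>
        integral {-1..1} (\<lambda>t. f i t * f j t) = (if i = j then 1 else 0)"
    using A by blast
  have mom: "\<And>k i. k \<in> {1..n} \<Longrightarrow> i \<le> k + n - 2 \<Longrightarrow> integral {-1..1} (\<lambda>t. f k t * t ^ i) = 0"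
    using A by blast
  have part1: "\<exists>c :: real. c \<noteq> 0 \<and> 1 / c ^ 2 = 2 * integral {0..1} (\<lambda>x. (pA (n - 1) x) ^ 2) \<and>
            (\<forall>x\<in>{0<..<1}. f n x = c * pA (n - 1) x)"
  proof -
    have nn: "n \<in> {1..n}" using assms(1) by auto
    obtain P where P: "degree P \<le> n - 1" "\<forall>t\<in>{0<..<1}. f n t = poly P t" using polyex[OF nn] by blast
    have odd: "f n (-t) = - f n t" if "t \<in> {0<..<1}" for t
    proof -
      have "(-1::real) ^ (n + n - 1) = -1" using assms(1) by (simp add: odd_pos)
      then show ?thesis using par[OF nn that] by simp
    qed
    have oP: "integral {0..1} (\<lambda>t. poly P t * t ^ (1 + 2*j)) = 0" if j: "j < n - 1" for j
    proof -
      have "integral {-1..1} (\<lambda>t. f n t * t ^ (1 + 2*j)) = 2 * integral {0..1} (\<lambda>t. poly P t * t ^ (1 + 2*j))"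
        by (rule sym_integral) (use odd P in \<open>auto intro!: continuous_intros\<close>)
      moreover have "integral {-1..1} (\<lambda>t. f n t * t ^ (1 + 2*j)) = 0" using j by (intro mom[OF nn]) auto
      ultimately show ?thesis by simp
    qed
    have nP: "2 * integral {0..1} (\<lambda>t. poly P t * poly P t) = 1"
    proof -
      have "integral {-1..1} (\<lambda>t. f n t * f n t) = 2 * integral {0..1} (\<lambda>t. poly P t * poly P t)"
        by (rule sym_integral) (use odd P in \<open>auto intro!: continuous_intros\<close>)
      then show ?thesis using orth[OF nn nn] by simp
    qed
    have oQ: "integral {0..1} (\<lambda>t. poly (PA (n-1)) t * t ^ (1 + 2*j)) = 0" if j: "j < n - 1" for j
      unfolding poly_PA by (rule pA_orth[OF j])
    have Q0: "poly (PA (n-1)) 0 \<noteq> 0" unfolding poly_PA by (rule pA0)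
    show ?thesis using finish[OF P(2) P(1) degree_PA Q0 oP oQ nP] unfolding poly_PA .
  qed
  have part2: "\<exists>d :: real. d \<noteq> 0 \<and> 1 / d ^ 2 = 2 * integral {0..1} (\<lambda>x. (qA (n - 1) x) ^ 2) \<and>
            (\<forall>x\<in>{0<..<1}. f (n - 1) x = d * qA (n - 1) x)" if n2: "n \<ge> 2"
  proof -
    have nn: "n - 1 \<in> {1..n}" using n2 by auto
    obtain P where P: "degree P \<le> n - 1" "\<forall>t\<in>{0<..<1}. f (n-1) t = poly P t" using polyex[OF nn] by blast
    have even: "f (n-1) (-t) = f (n-1) t" if "t \<in> {0<..<1}" for t
    proof -
      have "(-1::real) ^ (n - 1 + n - 1) = 1" using n2
        by (simp add: neg_one_even_power)
      then show ?thesis using par[OF nn that] by simp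
    qed
    have oP: "integral {0..1} (\<lambda>t. poly P t * t ^ (0 + 2*j)) = 0" if j: "j < n - 1" for j
    proof -
      have "integral {-1..1} (\<lambda>t. f (n-1) t * t ^ (0 + 2*j)) = 2 * integral {0..1} (\<lambda>t. poly P t * t ^ (0 + 2*j))"
        by (rule sym_integral) (use even P in \<open>auto intro!: continuous_intros simp: power_mult\<close>)
      moreover have "integral {-1..1} (\<lambda>t. f (n-1) t * t ^ (0 + 2*j)) = 0" using j n2 by (intro mom[OF nn]) auto
      ultimately show ?thesis by simp
    qed
    have nP: "2 * integral {0..1} (\<lambda>t. poly P t * poly P t) = 1"
    proof -
      have "integral {-1..1} (\<lambda>t. f (n-1) t * f (n-1) t) = 2 * integral {0..1} (\<lambda>t. poly P t * poly P t)"
        by (rule sym_integral) (use even P in \<open>auto intro!: continuous_intros\<close>)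
      then show ?thesis using orth[OF nn nn] by simp
    qed
    have oQ: "integral {0..1} (\<lambda>t. poly (QA (n-1)) t * t ^ (0 + 2*j)) = 0" if j: "j < n - 1" for j
      unfolding poly_QA by (rule qA_orth[OF j])
    have Q0: "poly (QA (n-1)) 0 \<noteq> 0" unfolding poly_QA by (rule qA0)
    show ?thesis using finish[OF P(2) P(1) degree_QA Q0 oP oQ nP] unfolding poly_QA .
  qed
  show ?thesis using part1 part2 by blast
qed
end
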